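(* Let $q$ be a prime power, $k\ge 3$ and $n\ge \frac{k(k+1)}{2}+k-3$ with $n\le q$. Then for every vector $\boldsymbol\alpha=(\alpha_1,\dots,\alpha_n)$ of pairwise distinct elements of $\mathbb F_q$, the Reed–Solomon code $\mathrm{RS}_{\boldsymbol\alpha}(n,k)$ has insdel distance at most $2n-4k+4$.
   Context: $\mathrm{RS}_{\boldsymbol\alpha}(n,k)=\{(f(\alpha_1),\dots,f(\alpha_n)): f\in\mathbb F_q[x],\ \deg f<k\}$. For $\mathbf u,\mathbf v\in\mathbb F_q^n$, the insdel distance $d_I(\mathbf u,\mathbf v)$ is the minimum number of insertions and deletions transforming $\mathbf u$ into $\mathbf v$; equivalently $d_I(\mathbf u,\mathbf v)=2n-2\ell_{\rm LCS}(\mathbf u,\mathbf v)$ where $\ell_{\rm LCS}$ is the length of a longest common subsequence. The insdel distance of a code is the minimum insdel distance between distinct codewords. *)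

theory Defs
  imports "HOL-Computational_Algebra.Polynomial" "HOL-Library.Sublist"
begin

definition lcs_len :: "'a list \<Rightarrow> 'a list \<Rightarrow> nat" where
  "lcs_len u v = Max {length w | w. subseq w u \<and> subseq w v}"

definition insdel_dist :: "'a list \<Rightarrow> 'a list \<Rightarrow> nat" where
  "insdel_dist u v = 2 * length u - 2 * lcs_len u v"

definition code_insdel_dist :: "'a list set \<Rightarrow> nat" where
  "code_insdel_dist C = Min {insdel_dist u v | u v. u \<in> C \<and> v \<in> C \<and> u \<noteq> v}"

definition RS_code :: "'a::field list \<Rightarrow> nat \<Rightarrow> 'a list set" where
  "RS_code alpha k = {map (poly f) alpha | f. degree f < k}"

end

theory Submission
  imports Defs "HOL-Library.FuncSet"
begin

lemma poly_zero_many_roots: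
  fixes p :: "'a::field poly"
  assumes "finite A" "card A \<ge> k" "degree p < k" "\<forall>x\<in>A. poly p x = 0"
  shows "p = 0"
proof (rule ccontr)
  assume "p \<noteq> 0"
  have "card A \<le> card {x. poly p x = 0}"
    by (intro card_mono poly_roots_finite) (use \<open>p \<noteq> 0\<close> assms in auto)
  also have "\<dots> \<le> degree p" by (rule card_poly_roots_bound) fact
  finally show False using assms by linarith
qed

lemma lcs_ge:
  assumes "subseq w u" "subseq w v"
  shows "length w \<le> lcs_len u v"
proof -
  have fin: "finite {length w | w. subseq w u \<and> subseq w v}"
    by (rule finite_subset[of _ "{..length u}"]) (auto dest: list_emb_length)
  show ?thesis unfolding lcs_len_def using assms by (intro Max_ge[OF fin]) auto
qed

lemma lcs_le:
  assumes "subseq w u" "subseq w v"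
  shows "lcs_len u v \<le> length u"
proof -
  have fin: "finite {length w | w. subseq w u \<and> subseq w v}"
    by (rule finite_subset[of _ "{..length u}"]) (auto dest: list_emb_length)
  show ?thesis unfolding lcs_len_def using assms
    by (subst Max_le_iff[OF fin]) (auto dest: list_emb_length)
qed

lemma code_le:
  assumes "u \<in> C" "v \<in> C" "u \<noteq> v" "\<forall>x\<in>C. length x = n"
  shows "code_insdel_dist C \<le> insdel_dist u v"
proof -
  have fin: "finite {insdel_dist u v | u v. u \<in> C \<and> v \<in> C \<and> u \<noteq> v}"
    by (rule finite_subset[of _ "{..2*n}"]) (use assms in \<open>auto simp: insdel_dist_def\<close>)
  show ?thesis unfolding code_insdel_dist_def using assms by (intro Min_le[OF fin]) auto
qed

lemma coeff_sum_monom: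
  "coeff (\<Sum>i<k. monom (a i) i) j = (if j < k then a j else 0)"
  by (simp add: coeff_sum coeff_monom)

theorem theorem3p9:
  fixes alpha :: "'a::{finite,field} list"
    and n k :: nat
  assumes "\<exists>p m. prime p \<and> m > 0 \<and> card (UNIV :: 'a set) = (p::nat) ^ m"
    and "k \<ge> 3"
    and "k * (k + 1) div 2 + k - 3 \<le> n"
    and "n \<le> card (UNIV :: 'a set)"
    and "length alpha = n"
    and "distinct alpha"
  shows "int (code_insdel_dist (RS_code alpha k)) \<le> 2 * int n - 4 * int k + 4"
proof -
  have k3: "k \<ge> 3" by fact
  have "k * k \<ge> 3 * k" using k3 by simp
  moreover have "k * (k + 1) = k * k + k" by (simp add: algebra_simps)
  ultimately have "k * (k + 1) \<ge> 2 * k + 4" using k3 by linarith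
  hence "k * (k + 1) div 2 \<ge> k + 2" by linarith
  hence n2k: "n \<ge> 2 * k - 1" using assms(3) by linarith
  let ?q = "card (UNIV :: 'a set)"
  have q2: "?q \<ge> 2"
  proof -
    have "card {0::'a, 1} \<le> ?q" by (rule card_mono) auto
    thus ?thesis by simp
  qed
  define Fp where "Fp c = (\<Sum>i<k. monom (c i) i)" for c :: "nat \<Rightarrow> 'a"
  define Gp where "Gp c = (\<Sum>i<k. monom (c (k + i)) i)" for c :: "nat \<Rightarrow> 'a"
  define E where "E c t = (if t < 2*k-2 then poly (Fp c) (alpha!t) - poly (Gp c) (alpha!(t+1))
      else poly (Gp c) (alpha!(2*k-2)))" for c t
  define \<Phi> where "\<Phi> c = restrict (E c) {..<2*k-1}" for c
  define D where "D = PiE {..<2*k} (\<lambda>_. UNIV :: 'a set)"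
  define C where "C = PiE {..<2*k-1} (\<lambda>_. UNIV :: 'a set)"
  have cD: "card D = ?q ^ (2*k)" unfolding D_def by (simp add: card_PiE)
  have cC: "card C = ?q ^ (2*k-1)" unfolding C_def by (simp add: card_PiE)
  have "\<not> inj_on \<Phi> D"
  proof
    assume "inj_on \<Phi> D"
    moreover have "\<Phi> ` D \<subseteq> C" unfolding C_def \<Phi>_def by (auto split: if_splits)
    ultimately have "card D \<le> card C"
      by (intro card_inj_on_le) (auto simp: C_def intro!: finite_PiE)
    moreover have "?q ^ (2*k-1) < ?q ^ (2*k)"
      using q2 k3 by (intro power_strict_increasing) auto
    ultimately show False using cD cC by linarith
  qed
  then obtain c1 c2 where c: "c1 \<in> D" "c2 \<in> D" "c1 \<noteq> c2" "\<Phi> c1 = \<Phi> c2"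
    unfolding inj_on_def by blast
  define f where "f = Fp c1 - Fp c2"
  define g where "g = Gp c1 - Gp c2"
  have cf: "coeff f j = (if j < k then c1 j - c2 j else 0)" for j
    by (simp add: f_def Fp_def coeff_sum_monom)
  have cg: "coeff g j = (if j < k then c1 (k+j) - c2 (k+j) else 0)" for j
    by (simp add: g_def Gp_def coeff_sum_monom)
  have degf: "degree f < k" using k3 by (intro degree_lessI) (auto simp: cf)
  have degg: "degree g < k" using k3 by (intro degree_lessI) (auto simp: cg)
  have Et: "E c1 t = E c2 t" if "t < 2*k-1" for t
    using fun_cong[OF c(4), of t] that by (simp add: \<Phi>_def)
  have eq: "poly f (alpha!t) = poly g (alpha!(t+1))" if "t < 2*k-2" for t
    using Et[of t] that by (simp add: E_def f_def g_def algebra_simps)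
  have last: "poly g (alpha!(2*k-2)) = 0"
    using Et[of "2*k-2"] k3 by (simp add: E_def g_def)
  have nz: "f \<noteq> 0 \<or> g \<noteq> 0"
  proof -
    obtain j where j: "c1 j \<noteq> c2 j" using c(3) by blast
    have "j < 2*k"
    proof (rule ccontr)
      assume "\<not> j < 2*k"
      hence "c1 j = undefined" "c2 j = undefined" using c(1,2) unfolding D_def
        by (auto intro: PiE_arb)
      thus False using j by simp
    qed
    show ?thesis
    proof (cases "j < k")
      case True
      hence "coeff f j \<noteq> 0" using j by (simp add: cf)
      thus ?thesis by auto
    next
      case False
      hence "coeff g (j-k) \<noteq> 0" using j \<open>j < 2*k\<close> by (simp add: cg)
      thus ?thesis by auto
    qed
  qed
  have fg: "f \<noteq> g"
  proof
    assume "f = g"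
    have z: "poly f (alpha!(2*k-2-m)) = 0" if "m \<le> 2*k-2" for m
      using that
    proof (induction m)
      case 0 then show ?case using last \<open>f = g\<close> by simp
    next
      case (Suc m)
      have "2*k-2-Suc m < 2*k-2" "2*k-2-Suc m + 1 = 2*k-2-m" using Suc.prems k3 by auto
      then show ?case using eq[of "2*k-2-Suc m"] Suc \<open>f = g\<close> by simp
    qed
    have "\<forall>x\<in>(\<lambda>t. alpha!t) ` {..2*k-2}. poly f x = 0"
    proof
      fix x assume "x \<in> (\<lambda>t. alpha!t) ` {..2*k-2}"
      then obtain t where "t \<le> 2*k-2" "x = alpha!t" by auto
      moreover have "2*k-2-(2*k-2-t) = t" using \<open>t \<le> 2*k-2\<close> by simp
      ultimately show "poly f x = 0" using z[of "2*k-2-t"] by simp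
    qed
    moreover have "card ((\<lambda>t. alpha!t) ` {..2*k-2}) = 2*k-1"
    proof -
      have "inj_on (\<lambda>t. alpha!t) {..2*k-2}"
        using assms(5,6) n2k k3 by (auto simp: inj_on_def nth_eq_iff_index_eq)
      thus ?thesis using k3 by (simp add: card_image)
    qed
    ultimately have "f = 0" using degf k3
      by (intro poly_zero_many_roots[of "(\<lambda>t. alpha!t) ` {..2*k-2}" k]) auto
    thus False using nz \<open>f = g\<close> by simp
  qed
  define u where "u = map (poly f) alpha"
  define v where "v = map (poly g) alpha"
  have uv: "u \<noteq> v"
  proof
    assume "u = v"
    hence "\<forall>x\<in>set alpha. poly (f - g) x = 0" by (auto simp: u_def v_def)
    moreover have "card (set alpha) \<ge> k" using assms(5,6) n2k by (simp add: distinct_card)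
    moreover have "degree (f - g) < k"
      using degf degg degree_diff_le[of f "k-1" g] by linarith
    ultimately have "f - g = 0" by (intro poly_zero_many_roots[of "set alpha" k]) auto
    thus False using fg by simp
  qed
  have inC: "u \<in> RS_code alpha k" "v \<in> RS_code alpha k"
    unfolding RS_code_def u_def v_def using degf degg by auto
  define w where "w = map (poly f) (take (2*k-2) alpha)"
  have s1: "subseq w u" unfolding w_def u_def
    by (intro subseq_map prefix_imp_subseq take_is_prefix)
  have w2: "w = map (poly g) (take (2*k-2) (drop 1 alpha))"
    using n2k assms(5) k3 by (intro nth_equalityI) (auto simp: w_def eq)
  have "subseq (take (2*k-2) (drop 1 alpha)) alpha"
  proof -
    have "subseq (take (2*k-2) (drop 1 alpha)) (drop 1 alpha)"
      by (intro prefix_imp_subseq take_is_prefix)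
    moreover have "subseq (drop 1 alpha) alpha" by (intro suffix_imp_subseq suffix_drop)
    ultimately show ?thesis using subseq_order.order_trans by blast
  qed
  hence s2: "subseq w v" unfolding w2 v_def by (rule subseq_map)
  have L1: "lcs_len u v \<ge> 2*k-2" using lcs_ge[OF s1 s2] n2k assms(5) by (simp add: w_def)
  have L2: "lcs_len u v \<le> n" using lcs_le[OF s1 s2] assms(5) by (simp add: u_def)
  have "code_insdel_dist (RS_code alpha k) \<le> insdel_dist u v"
  proof (rule code_le[OF inC uv, of n])
    show "\<forall>x\<in>RS_code alpha k. length x = n" using assms(5) by (auto simp: RS_code_def)
  qed
  also have "insdel_dist u v = 2*n - 2 * lcs_len u v"
    by (simp add: insdel_dist_def u_def assms(5))
  finally have "int (code_insdel_dist (RS_code alpha k)) \<le> int (2*n - 2 * lcs_len u v)" by simp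
  also have "\<dots> = 2 * int n - 2 * int (lcs_len u v)" using L2 by simp
  also have "\<dots> \<le> 2 * int n - 4 * int k + 4" using L1 k3 by linarith
  finally show ?thesis .
qed

end
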